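(* There is a universal constant $c>0$ such that the following holds. Let $\mathbf x\sim\mathcal N(0,I_p)$, $\mathbf u\in\mathbb R^p$, $b,v\in\mathbb R$, and $\mathbf a=b\,\mathbb I(|b+\langle\mathbf x,\mathbf u\rangle|<v)\,\mathbf x$. Then for every $\mathbf t\in\mathbb R^p$, $$\mathbb E\big[e^{\langle\mathbf t,\mathbf a-\mathbb E[\mathbf a]\rangle}\big]\le e^{c\,b^2\|\mathbf t\|^2/2}.$$
   Context: $\mathbb I(\cdot)$ is the indicator function; $\|\cdot\|$ is the Euclidean norm. *)

theory Defs
  imports "HOL-Probability.Probability"
begin

text \<open>Vectors in R^p are represented as functions nat => real, of which only the
coordinates i < p matter.\<close>

definition std_gauss :: "nat \<Rightarrow> (nat \<Rightarrow> real) measure" where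
  "std_gauss p = PiM {..<p} (\<lambda>_. density lborel std_normal_density)"

definition ip :: "nat \<Rightarrow> (nat \<Rightarrow> real) \<Rightarrow> (nat \<Rightarrow> real) \<Rightarrow> real" where
  "ip p x y = (\<Sum>i<p. x i * y i)"

definition sqnorm :: "nat \<Rightarrow> (nat \<Rightarrow> real) \<Rightarrow> real" where
  "sqnorm p x = (\<Sum>i<p. (x i)\<^sup>2)"

definition avec :: "nat \<Rightarrow> (nat \<Rightarrow> real) \<Rightarrow> real \<Rightarrow> real \<Rightarrow> (nat \<Rightarrow> real) \<Rightarrow> nat \<Rightarrow> real" where
  "avec p u b v x i = b * (if \<bar>b + ip p x u\<bar> < v then 1 else 0) * x i"

end

theory Submission
  imports Defs
begin

lemma mgf1: "(\<integral>\<^sup>+x. ennreal (exp (a*x)) \<partial>(density lborel std_normal_density)) = ennreal (exp (a^2/2))"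
proof -
  have eq: "ennreal (std_normal_density x) * ennreal (exp (a*x)) = ennreal (exp (a^2/2)) * ennreal (std_normal_density (-a + 1 * x))" for x
  proof -
    have "std_normal_density x * exp (a*x) = exp (a^2/2) * std_normal_density (-a + 1 * x)"
    proof -
      have "exp (a*x) * exp (- x\<^sup>2 / 2) = exp (a^2/2) * exp (- (-a + 1 * x)\<^sup>2 / 2)"
        unfolding mult_exp_exp by (simp add: power2_eq_square algebra_simps add_divide_distrib diff_divide_distrib)
      thus ?thesis unfolding std_normal_density_def by (simp add: algebra_simps)
    qed
    thus ?thesis by (simp add: ennreal_mult'[symmetric])
  qed
  have one: "(\<integral>\<^sup>+x. ennreal (std_normal_density x) \<partial>lborel) = 1"
    by (subst nn_integral_eq_integral) auto
  have "(\<integral>\<^sup>+x. ennreal (exp (a*x)) \<partial>(density lborel std_normal_density)) =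
        (\<integral>\<^sup>+x. ennreal (std_normal_density x) * ennreal (exp (a*x)) \<partial>lborel)"
    by (subst nn_integral_density) auto
  also have "\<dots> = (\<integral>\<^sup>+x. ennreal (exp (a^2/2)) * ennreal (std_normal_density (-a + 1 * x)) \<partial>lborel)"
    by (simp only: eq)
  also have "\<dots> = ennreal (exp (a^2/2)) * (\<integral>\<^sup>+x. ennreal (std_normal_density (-a + 1 * x)) \<partial>lborel)"
    by (subst nn_integral_cmult) auto
  also have "(\<integral>\<^sup>+x. ennreal (std_normal_density (-a + 1 * x)) \<partial>lborel) = 1"
    using nn_integral_real_affine[of "\<lambda>x. ennreal (std_normal_density x)" 1 "-a"] one by simp
  finally show ?thesis by simp
qed

interpretation SG: product_sigma_finite "\<lambda>_::nat. std_normal_distribution"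
  by (simp add: product_sigma_finite_def prob_space_imp_sigma_finite prob_space_normal_density)

lemma prob_std_gauss: "prob_space (std_gauss p)"
  unfolding std_gauss_def by (auto intro!: prob_space_PiM prob_space_normal_density)

lemma meas_comp[measurable]: "i < p \<Longrightarrow> (\<lambda>x. x i) \<in> borel_measurable (std_gauss p)"
  proof -
  assume "i < p"
  hence "(\<lambda>x. x i) \<in> std_gauss p \<rightarrow>\<^sub>M std_normal_distribution"
    unfolding std_gauss_def by (intro measurable_component_singleton) simp
  thus ?thesis by (simp add: measurable_def)
qed

lemma meas_lin[measurable]: "(\<lambda>x. \<Sum>i<p. w i * x i) \<in> borel_measurable (std_gauss p)"
  by (intro borel_measurable_sum borel_measurable_times borel_measurable_const) (auto intro: meas_comp)

lemma mgf: "(\<integral>\<^sup>+x. ennreal (exp (\<Sum>i<p. w i * x i)) \<partial>std_gauss p) = ennreal (exp (\<Sum>i<p. (w i)^2/2))"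
proof -
  have "(\<integral>\<^sup>+x. ennreal (exp (\<Sum>i<p. w i * x i)) \<partial>std_gauss p) =
     (\<integral>\<^sup>+x. (\<Prod>i\<in>{..<p}. (\<lambda>i y. ennreal (exp (w i * y))) i (x i)) \<partial>std_gauss p)"
    by (simp add: exp_sum prod_ennreal)
  also have "\<dots> = (\<Prod>i\<in>{..<p}. \<integral>\<^sup>+y. ennreal (exp (w i * y)) \<partial>std_normal_distribution)"
    unfolding std_gauss_def by (subst SG.product_nn_integral_prod) auto
  also have "\<dots> = (\<Prod>i\<in>{..<p}. ennreal (exp ((w i)^2/2)))"
    by (simp add: mgf1)
  also have "\<dots> = ennreal (exp (\<Sum>i<p. (w i)^2/2))"
    by (simp add: exp_sum prod_ennreal)
  finally show ?thesis .
qed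

lemma mgf_hb: "has_bochner_integral (std_gauss p) (\<lambda>x. exp (\<Sum>i<p. w i * x i)) (exp (\<Sum>i<p. (w i)^2/2))"
  by (rule has_bochner_integral_nn_integral) (auto simp: mgf)

lemma comp_distr: "i < p \<Longrightarrow> distr (std_gauss p) std_normal_distribution (\<lambda>x. x i) = std_normal_distribution"
  unfolding std_gauss_def by (rule distr_PiM_component) (auto intro: prob_space_normal_density)

lemma comp_meas': "i < p \<Longrightarrow> (\<lambda>x. x i) \<in> std_gauss p \<rightarrow>\<^sub>M std_normal_distribution"
  unfolding std_gauss_def by (intro measurable_component_singleton) simp

lemma comp_int: assumes "i < p" shows "integrable (std_gauss p) (\<lambda>x. x i)"
proof -
  have "integrable std_normal_distribution (\<lambda>y. y)"
    by (subst integrable_density) (use integrable_std_normal_moment[of 1] in auto)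
  hence "integrable (distr (std_gauss p) std_normal_distribution (\<lambda>x. x i)) (\<lambda>y. y)"
    using comp_distr[OF assms] by simp
  thus ?thesis using comp_meas'[OF assms] by (subst (asm) integrable_distr_eq) auto
qed

lemma comp_mean: assumes "i < p" shows "(\<integral>x. x i \<partial>std_gauss p) = 0"
proof -
  have "(\<integral>y. y \<partial>std_normal_distribution) = 0"
    by (subst integral_density) (use integral_std_normal_moment_odd[of 0] in auto)
  hence "(\<integral>y. y \<partial>distr (std_gauss p) std_normal_distribution (\<lambda>x. x i)) = 0"
    using comp_distr[OF assms] by simp
  thus ?thesis using comp_meas'[OF assms] by (subst (asm) integral_distr) auto
qed

lemma final_ineq:
  fixes S mu :: real assumes S: "S > 0" and mu: "- mu \<le> 4 * sqrt S"
  shows "exp (-mu) * (mu + exp (S/2)) \<le> exp (100 * S)"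
proof -
  have e1: "exp (-mu) * (1 + mu) \<le> 1"
  proof -
    have "1 + mu \<le> exp mu" using exp_ge_add_one_self[of mu] by simp
    hence "exp (-mu) * (1 + mu) \<le> exp (-mu) * exp mu" by (intro mult_left_mono) auto
    thus ?thesis by (simp add: exp_minus)
  qed
  have ge0: "exp (S/2) - 1 \<ge> 0" using S by simp
  have e2: "exp (-mu) \<le> exp (4 * sqrt S)" using mu by simp
  have split: "exp (-mu) * (mu + exp (S/2)) = exp (-mu) * (1 + mu) + exp (-mu) * (exp (S/2) - 1)"
    by (simp add: algebra_simps)
  have "exp (-mu) * (mu + exp (S/2)) \<le> 1 + exp (4 * sqrt S) * (exp (S/2) - 1)"
    unfolding split using e1 mult_right_mono[OF e2 ge0] by linarith
  also have "\<dots> \<le> exp (100 * S)"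
  proof (cases "S \<le> 1")
    case True
    have sq: "sqrt S \<le> 1" using True S by simp
    have "exp (4 * sqrt S) \<le> exp 4" using sq by simp
    also have "exp (4::real) = exp 1 ^ 4" using exp_of_nat_mult[of 4 "1::real"] by simp
    also have "\<dots> \<le> 3 ^ 4" by (intro power_mono exp_le) auto
    finally have a: "exp (4 * sqrt S) \<le> 81" by simp
    have "1 - S/2 \<le> exp (-(S/2))" using exp_ge_add_one_self[of "-(S/2)"] by simp
    hence "(1 - S/2) * exp (S/2) \<le> 1" by (simp add: exp_minus field_simps)
    moreover have "1 \<le> (1 - S/2) * (1 + S)"
    proof -
      have "S * S \<le> S * 1" using True S by (intro mult_left_mono) auto
      thus ?thesis by (simp add: algebra_simps)
    qed
    ultimately have "(1 - S/2) * exp (S/2) \<le> (1 - S/2) * (1 + S)" by linarith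
    moreover have pos: "0 < 1 - S/2" using True by simp
    ultimately have "exp (S/2) \<le> 1 + S"
      by (rule mult_left_le_imp_le)
    hence b: "exp (S/2) - 1 \<le> S" by simp
    have "exp (4 * sqrt S) * (exp (S/2) - 1) \<le> 81 * S"
      using mult_mono[OF a b] ge0 by simp
    hence "1 + exp (4 * sqrt S) * (exp (S/2) - 1) \<le> 1 + 81 * S" by simp
    also have "\<dots> \<le> exp (81 * S)" using exp_ge_add_one_self[of "81*S"] by simp
    also have "\<dots> \<le> exp (100 * S)" using S by simp
    finally show ?thesis .
  next
    case False
    have sq1: "1 \<le> sqrt S" using False by simp
    hence "sqrt S * 1 \<le> sqrt S * sqrt S" by (intro mult_left_mono) auto
    hence sq: "sqrt S \<le> S" using S by simp
    have "exp (4 * sqrt S) * (exp (S/2) - 1) \<le> exp (4 * S) * exp (S/2)"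
      using sq ge0 by (intro mult_mono) auto
    also have "\<dots> = exp (9/2 * S)" unfolding mult_exp_exp by (rule arg_cong[of _ _ exp]) simp
    finally have a: "exp (4 * sqrt S) * (exp (S/2) - 1) \<le> exp (9/2 * S)" .
    have two: "2 \<le> exp S" using exp_ge_add_one_self[of S] False by linarith
    have "1 + exp (4 * sqrt S) * (exp (S/2) - 1) \<le> 2 * exp (9/2 * S)"
    proof -
      have "1 \<le> exp (9/2 * S)" using S by simp
      thus ?thesis using a by linarith
    qed
    also have "\<dots> \<le> exp S * exp (9/2 * S)" using two by (intro mult_right_mono) auto
    also have "\<dots> = exp (11/2 * S)" unfolding mult_exp_exp by (rule arg_cong[of _ _ exp]) simp
    also have "\<dots> \<le> exp (100 * S)" using S by simp
    finally show ?thesis .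
  qed
  finally show ?thesis .
qed


lemma meas_ip[measurable]: "(\<lambda>x. ip p x u) \<in> borel_measurable (std_gauss p)"
  unfolding ip_def by (intro borel_measurable_sum borel_measurable_times borel_measurable_const) (auto intro: meas_comp)

lemma abs_le_exps: "\<bar>z::real\<bar> \<le> exp z + exp (-z)"
proof -
  have a: "\<bar>z\<bar> \<le> exp \<bar>z\<bar>" using exp_ge_add_one_self[of "\<bar>z\<bar>"] by linarith
  have "exp \<bar>z\<bar> \<le> exp z + exp (-z)"
    using exp_gt_zero[of z] exp_gt_zero[of "-z"] by (cases "z \<ge> 0") auto
  thus ?thesis using a by linarith
qed

lemma core:
  fixes p :: nat and u t :: "nat \<Rightarrow> real" and b v :: real
  shows "(\<integral>\<^sup>+ x. ennreal (exp (ip p t (\<lambda>i. avec p u b v x i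
                 - (\<integral> y. avec p u b v y i \<partial>std_gauss p)))) \<partial>std_gauss p)
       \<le> ennreal (exp (100 * (b\<^sup>2 * sqnorm p t)))"
proof -
  define M where "M = std_gauss p"
  interpret prob_space M unfolding M_def by (rule prob_std_gauss)
  define w where "w i = b * t i" for i
  define ind where "ind x = (if \<bar>b + ip p x u\<bar> < v then 1 else 0::real)" for x
  define Z where "Z x = (\<Sum>i<p. w i * x i)" for x :: "nat \<Rightarrow> real"
  define Y where "Y x = ind x * Z x" for x
  define S where "S = (\<Sum>i<p. (w i)\<^sup>2)"
  define I where "I i = (\<integral>y. ind y * y i \<partial>M)" for i
  define mu where "mu = (\<integral>x. Y x \<partial>M)"
  have S_eq: "b\<^sup>2 * sqnorm p t = S"
    unfolding S_def sqnorm_def w_def by (simp add: sum_distrib_left power_mult_distrib)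
  have S_nn: "S \<ge> 0" unfolding S_def by (intro sum_nonneg) auto
  have ind_meas[measurable]: "ind \<in> borel_measurable M"
    unfolding ind_def[abs_def] M_def by measurable
  have ind01: "ind x = 0 \<or> ind x = 1" for x unfolding ind_def by auto
  have Z_meas[measurable]: "Z \<in> borel_measurable M" unfolding Z_def[abs_def] M_def by measurable
  have Y_meas[measurable]: "Y \<in> borel_measurable M" unfolding Y_def[abs_def] by measurable
  have int_x: "integrable M (\<lambda>x. x i)" if "i < p" for i using comp_int[OF that] by (simp add: M_def)
  have int_ix: "integrable M (\<lambda>x. ind x * x i)" if "i < p" for i
  proof (rule Bochner_Integration.integrable_bound[OF int_x[OF that]])
    show "(\<lambda>x. ind x * x i) \<in> borel_measurable M"
      using meas_comp[OF that] by (simp add: M_def[symmetric])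
    have "norm (ind x * x i) \<le> norm (x i)" for x using ind01[of x] by auto
    thus "AE x in M. norm (ind x * x i) \<le> norm (x i)" by (intro AE_I2)
  qed
  have int_Z: "integrable M Z" unfolding Z_def[abs_def] using int_x by auto
  have mean_Z: "(\<integral>x. Z x \<partial>M) = 0"
    unfolding Z_def using int_x comp_mean by (simp add: M_def)
  have Y_sum: "Y x = (\<Sum>i<p. w i * (ind x * x i))" for x
    unfolding Y_def Z_def by (simp add: sum_distrib_left algebra_simps)
  have int_Y: "integrable M Y" unfolding Y_sum using int_ix by auto
  have mu_eq: "mu = (\<Sum>i<p. w i * I i)"
    unfolding mu_def Y_sum I_def using int_ix by simp
  have integrand: "ip p t (\<lambda>i. avec p u b v x i - (\<integral> y. avec p u b v y i \<partial>std_gauss p)) = Y x - mu" for x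
  proof -
    have av: "avec p u b v y i = b * (ind y * y i)" for y i
      unfolding avec_def ind_def by simp
    have avI: "(\<integral> y. avec p u b v y i \<partial>std_gauss p) = b * I i" for i
      unfolding av I_def M_def by simp
    have "ip p t (\<lambda>i. avec p u b v x i - (\<integral> y. avec p u b v y i \<partial>std_gauss p))
         = (\<Sum>i<p. t i * (avec p u b v x i - b * I i))"
      unfolding ip_def by (simp only: avI)
    also have "\<dots> = (\<Sum>i<p. w i * (ind x * x i) - w i * I i)"
      unfolding av w_def by (simp add: algebra_simps)
    also have "\<dots> = (\<Sum>i<p. w i * (ind x * x i)) - (\<Sum>i<p. w i * I i)"
      by (simp add: sum_subtractf)
    finally have "ip p t (\<lambda>i. avec p u b v x i - (\<integral> y. avec p u b v y i \<partial>std_gauss p))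
         = (\<Sum>i<p. w i * (ind x * x i)) - (\<Sum>i<p. w i * I i)" .
    thus ?thesis using Y_sum mu_eq by simp
  qed
  have mgfZ: "has_bochner_integral M (\<lambda>x. exp (Z x)) (exp (S/2))"
    using mgf_hb[of p w] unfolding Z_def[abs_def] S_def M_def by (simp add: sum_divide_distrib)
  have int_eZ: "integrable M (\<lambda>x. exp (Z x))" using mgfZ by (simp add: has_bochner_integral_iff)
  define R where "R x = 1 + Y x + (exp (Z x) - 1 - Z x)" for x
  have int_R: "integrable M R" unfolding R_def[abs_def] using int_Y int_eZ int_Z by auto
  have int_R_val: "(\<integral>x. R x \<partial>M) = mu + exp (S/2)"
    unfolding R_def[abs_def] using int_Y int_eZ int_Z mean_Z has_bochner_integral_integral_eq[OF mgfZ]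
    by (simp add: mu_def)
  have eY_le: "exp (Y x) \<le> R x" for x
  proof -
    have e: "1 + Z x \<le> exp (Z x)" by (rule exp_ge_add_one_self)
    show ?thesis using ind01[of x]
    proof
      assume "ind x = 0" hence "Y x = 0" unfolding Y_def by simp
      thus ?thesis unfolding R_def using e by (simp, linarith)
    next
      assume "ind x = 1" thus ?thesis unfolding R_def Y_def by simp
    qed
  qed
  have int_eY: "integrable M (\<lambda>x. exp (Y x))"
  proof (rule Bochner_Integration.integrable_bound[OF int_R])
    show "(\<lambda>x. exp (Y x)) \<in> borel_measurable M" by measurable
    show "AE x in M. norm (exp (Y x)) \<le> norm (R x)"
      using eY_le by (auto intro!: always_eventually) (metis abs_ge_self exp_gt_zero less_le_trans order_less_imp_le order_trans)
  qed
  have eY_int_le: "(\<integral>x. exp (Y x) \<partial>M) \<le> mu + exp (S/2)"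
    unfolding int_R_val[symmetric] using int_eY int_R eY_le by (intro integral_mono) auto
  have lhs: "(\<integral>\<^sup>+ x. ennreal (exp (Y x - mu)) \<partial>M) = ennreal (exp (-mu) * (\<integral>x. exp (Y x) \<partial>M))"
  proof -
    have f: "(\<lambda>x. exp (Y x - mu)) = (\<lambda>x. exp (-mu) * exp (Y x))"
      by (simp add: mult_exp_exp)
    have i: "integrable M (\<lambda>x. exp (-mu) * exp (Y x))" using int_eY by simp
    have "(\<integral>\<^sup>+ x. ennreal (exp (Y x - mu)) \<partial>M) = (\<integral>\<^sup>+ x. ennreal (exp (-mu) * exp (Y x)) \<partial>M)"
      by (intro nn_integral_cong) (simp add: mult_exp_exp)
    also have "\<dots> = ennreal (\<integral>x. exp (-mu) * exp (Y x) \<partial>M)"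
      by (rule nn_integral_eq_integral[OF i]) auto
    also have "(\<integral>x. exp (-mu) * exp (Y x) \<partial>M) = exp (-mu) * (\<integral>x. exp (Y x) \<partial>M)"
      by (rule integral_mult_right_zero)
    finally show ?thesis .
  qed
  show ?thesis
  proof (cases "S = 0")
    case True
    hence w0: "w i = 0" if "i < p" for i
      using that unfolding S_def by (simp add: sum_nonneg_eq_0_iff)
    hence "Y x = 0" for x unfolding Y_def Z_def by simp
    hence Y0: "Y = (\<lambda>_. 0)" by (intro ext)
    hence "mu = 0" unfolding mu_def by simp
    have one: "(\<integral>\<^sup>+ x. ennreal (exp (Y x - mu)) \<partial>M) = 1"
      using \<open>mu = 0\<close> Y0 by (simp add: emeasure_space_1)
    have z: "b\<^sup>2 * sqnorm p t = 0" using S_eq True by simp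
    show ?thesis unfolding integrand z using one by (simp add: M_def)
  next
    case False
    hence Spos: "S > 0" using S_nn by simp
    define s where "s = sqrt S"
    have spos: "s > 0" using Spos by (simp add: s_def)
    have ss: "s * s = S" using S_nn by (simp add: s_def)
    have mgf_pm: "has_bochner_integral M (\<lambda>x. exp (c * Z x / s)) (exp (1/2))" if "c = 1 \<or> c = -1" for c
    proof -
      have "(\<Sum>i<p. (c * w i / s)\<^sup>2 / 2) = S / (s * s) / 2"
        using that unfolding S_def by (auto simp: power_divide sum_divide_distrib[symmetric] power2_eq_square)
      also have "\<dots> = 1/2" using ss Spos by simp
      finally have e: "(\<Sum>i<p. (c * w i / s)\<^sup>2 / 2) = 1/2" .
      have z: "c * Z x / s = (\<Sum>i<p. (c * w i / s) * x i)" for x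
        unfolding Z_def by (simp add: sum_distrib_left sum_divide_distrib algebra_simps)
      show ?thesis using mgf_hb[of p "\<lambda>i. c * w i / s"] unfolding z e M_def .
    qed
    have h1: "has_bochner_integral M (\<lambda>x. exp (1 * Z x / s)) (exp (1/2))" by (rule mgf_pm) simp
    have h2: "has_bochner_integral M (\<lambda>x. exp (-1 * Z x / s)) (exp (1/2))" by (rule mgf_pm) simp
    have int_p: "integrable M (\<lambda>x. exp (1 * Z x / s))" by (rule has_bochner_integral_iff[THEN iffD1, OF h1, THEN conjunct1])
    have int_m: "integrable M (\<lambda>x. exp (-1 * Z x / s))" by (rule has_bochner_integral_iff[THEN iffD1, OF h2, THEN conjunct1])
    have "-mu = (\<integral>x. - Y x \<partial>M)" unfolding mu_def by simp
    also have "\<dots> \<le> (\<integral>x. s * (exp (1 * Z x / s) + exp (-1 * Z x / s)) \<partial>M)"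
    proof (rule integral_mono)
      show "integrable M (\<lambda>x. - Y x)" using int_Y by simp
      show "integrable M (\<lambda>x. s * (exp (1 * Z x / s) + exp (-1 * Z x / s)))" using int_p int_m by simp
      fix x
      have "- Y x \<le> \<bar>Z x\<bar>" using ind01[of x] unfolding Y_def by auto
      also have "\<bar>Z x\<bar> = s * \<bar>Z x / s\<bar>" using spos by (simp add: abs_divide)
      also have "\<dots> \<le> s * (exp (Z x / s) + exp (- (Z x / s)))" using spos abs_le_exps[of "Z x / s"] by (intro mult_left_mono) (simp_all only: order_less_imp_le)
      finally show "- Y x \<le> s * (exp (1 * Z x / s) + exp (-1 * Z x / s))" by simp
    qed
    also have "\<dots> = s * (2 * exp (1/2))"
    proof -
      have "(\<integral>x. s * (exp (1 * Z x / s) + exp (-1 * Z x / s)) \<partial>M)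
          = s * ((\<integral>x. exp (1 * Z x / s) \<partial>M) + (\<integral>x. exp (-1 * Z x / s) \<partial>M))"
        by (simp only: integral_mult_right_zero Bochner_Integration.integral_add[OF int_p int_m])
      also have "\<dots> = s * (2 * exp (1/2))"
        using has_bochner_integral_integral_eq[OF h1] has_bochner_integral_integral_eq[OF h2] by simp
      finally show ?thesis .
    qed
    also have "\<dots> \<le> 4 * s"
    proof -
      have "1 - 1/2 \<le> exp (-(1/2::real))" using exp_ge_add_one_self[of "-(1/2)"] by simp
      hence "exp (1/2::real) \<le> 2" by (simp add: exp_minus field_simps)
      thus ?thesis using spos by simp
    qed
    finally have mub: "- mu \<le> 4 * sqrt S" by (simp add: s_def)
    have "(\<integral>\<^sup>+ x. ennreal (exp (Y x - mu)) \<partial>M) \<le> ennreal (exp (-mu) * (mu + exp (S/2)))"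
      unfolding lhs using eY_int_le by (intro ennreal_leI mult_left_mono) auto
    also have "\<dots> \<le> ennreal (exp (100 * S))"
      using final_ineq[OF Spos mub] by (rule ennreal_leI)
    finally show ?thesis unfolding integrand S_eq by (simp add: M_def)
  qed
qed


theorem mainTheorem8:
  shows "\<exists>c>0. \<forall>p::nat. \<forall>(u::nat \<Rightarrow> real) (b::real) (v::real) (t::nat \<Rightarrow> real).
     p \<ge> 1 \<longrightarrow>
     (\<integral>\<^sup>+ x. ennreal (exp (ip p t (\<lambda>i. avec p u b v x i
                 - (\<integral> y. avec p u b v y i \<partial>std_gauss p)))) \<partial>std_gauss p)
       \<le> ennreal (exp (c * b\<^sup>2 * sqnorm p t / 2))"
proof (intro exI[of _ "200::real"] conjI allI impI)
  fix p :: nat and u t :: "nat \<Rightarrow> real" and b v :: real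
  have e: "200 * b\<^sup>2 * sqnorm p t / 2 = 100 * (b\<^sup>2 * sqnorm p t)" by simp
  show "(\<integral>\<^sup>+ x. ennreal (exp (ip p t (\<lambda>i. avec p u b v x i
                 - (\<integral> y. avec p u b v y i \<partial>std_gauss p)))) \<partial>std_gauss p)
       \<le> ennreal (exp (200 * b\<^sup>2 * sqnorm p t / 2))" unfolding e by (rule core)
qed simp

end
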